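(* Under all the hypotheses of the following setting: $C\subseteq\mathbb{R}^n$ nonempty closed convex; $F$ continuously differentiable; $x^*$ a solution of VIP$(F,C)$; a neighborhood $X$ of $x^*$ and constants $L_1,L_2,\mu>0$ with $\|F(x)-F(y)\|\le L_1\|x-y\|$, $\|\nabla F(x)-\nabla F(y)\|\le L_2\|x-y\|$ for $x,y\in X$ and $\langle\nabla F(x)d,d\rangle\ge\mu\|d\|^2$ for $x\in X$, $d\in\mathbb{R}^n$; sequences $\{x_k\}\subset C$ with $x_k\to x^*$, $B_k$, $\mu_k>0$, $\rho_k\ge0$, $\delta_k>0$, inexact solutions $z_k\in C$ and exact solutions $\hat z_k$ of VIP$(\varphi_k,C)$; and constants $D,C_1,C_2>0$ such that for all sufficiently large $k$: $\|B_k-\nabla F(x_k)\|\le D$; $\mu_k=O(r_k)$, $\mu_k\le C_1\|x_k-x^*\|$, $\rho_k\to0$; $B_k+\mu_kI$ positive definite with $(1+\|B_k+\mu_kI\|)/c_k\le C_2$; $\|(B_k-\nabla F(x_k))(z_k-x_k)\|\le\delta_k\|z_k-x_k\|$, $\mu_k<\mu/2$, $\delta_k\le\mu/16$. Then for every $\alpha>0$ there exist constants $L_1',L_2',L_3',L_4',L_5'>0$ such that for all sufficiently large $k$, $$f_\alpha(z_k)\le L_1'\|x_k-x^*\|^4+(L_2'\delta_k+L_3')\|x_k-x^*\|^3+(L_4'\delta_k+L_5'\delta_k^2)\|x_k-x^*\|^2.$$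
   Context: VIP$(F,C)$: find $x^*\in C$ with $\langle F(x^* ),x-x^*\rangle\ge0$ for all $x\in C$. $P_C$ is the Euclidean projection onto $C$. $r_k=\|x_k-P_C(x_k-F(x_k))\|$. For $\alpha>0$ the merit function is $f_\alpha(x)=\max_{y\in C}\{-\langle F(x),y-x\rangle-\tfrac{\alpha}{2}\|y-x\|^2\}$. For each $k$, $\varphi_k(z)=F(x_k)+(B_k+\mu_kI)(z-x_k)$; $\hat z_k\in C$ is the unique solution of VIP$(\varphi_k,C)$: $\langle\varphi_k(\hat z_k),x-\hat z_k\rangle\ge0$ for all $x\in C$. With $e_k=z_k-P_C(z_k-\varphi_k(z_k))$, the inexact solutions $z_k\in C$ satisfy $\|e_k\|\le\rho_k\mu_k\|z_k-x_k\|$ and $\langle e_k,\varphi_k(z_k)+z_k-x_k\rangle\le\rho_k\mu_k\|z_k-x_k\|^2$. $c_k$ is the smallest eigenvalue of the symmetric part of $B_k+\mu_kI$. *)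

theory Defs
  imports "HOL-Analysis.Analysis" "HOL-Library.Landau_Symbols"
begin

definition vip_sol :: "('a::real_inner \<Rightarrow> 'a) \<Rightarrow> 'a set \<Rightarrow> 'a \<Rightarrow> bool" where
  "vip_sol F C xs \<longleftrightarrow> xs \<in> C \<and> (\<forall>y\<in>C. F xs \<bullet> (y - xs) \<ge> 0)"

definition mnorm :: "real^'n^'n \<Rightarrow> real" where
  "mnorm A = onorm (\<lambda>v. A *v v)"

definition pos_def :: "real^'n^'n \<Rightarrow> bool" where
  "pos_def A \<longleftrightarrow> (\<forall>d. d \<noteq> 0 \<longrightarrow> d \<bullet> (A *v d) > 0)"

definition min_eig_sym :: "real^'n^'n \<Rightarrow> real" where
  "min_eig_sym A = Min {l. \<exists>v. v \<noteq> 0 \<and> ((1/2) *\<^sub>R (A + transpose A)) *v v = l *\<^sub>R v}"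

definition resid :: "('a::euclidean_space \<Rightarrow> 'a) \<Rightarrow> 'a set \<Rightarrow> 'a \<Rightarrow> real" where
  "resid F C x = norm (x - closest_point C (x - F x))"

definition merit :: "('a::real_inner \<Rightarrow> 'a) \<Rightarrow> 'a set \<Rightarrow> real \<Rightarrow> 'a \<Rightarrow> real" where
  "merit F C \<alpha> x = (SUP y\<in>C. - (F x \<bullet> (y - x)) - (\<alpha> / 2) * (norm (y - x))^2)"

end

theory Submission imports Defs begin

lemma mat_mulv: "mat c *v (x::real^'n) = c *\<^sub>R x"
proof -
  have "(\<Sum>j\<in>UNIV. (if i = j then c else 0) * x $ j) = c * x $ i" for i
  proof -
    have "(\<Sum>j\<in>UNIV. (if i = j then c else 0) * x $ j) = (\<Sum>j\<in>UNIV. if i = j then c * x $ j else 0)"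
      by (rule sum.cong) auto
    then show ?thesis by simp
  qed
  then show ?thesis by (simp add: vec_eq_iff matrix_vector_mult_def mat_def)
qed

lemma mnorm_mulv: "norm (A *v v) \<le> mnorm A * norm v"
  unfolding mnorm_def by (rule onorm[OF matrix_vector_mul_bounded_linear])

lemma dbound:
  fixes F :: "'a::euclidean_space \<Rightarrow> 'a"
  assumes cvx: "convex C" and cl: "closed C" and sol: "vip_sol F C xs" and zC: "z \<in> C"
    and pdef: "p = F x + v"
    and edef: "e = z - closest_point C (z - p)"
    and eb: "norm e \<le> \<eta> * norm (z - x)" and eta0: "0 \<le> \<eta>" and eta1: "\<eta> \<le> 1"
    and etac: "\<eta> * (M + 2) \<le> c / 2" and c0: "c > 0" and M0: "M \<ge> 0" and L0: "L \<ge> 0"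
    and vb: "norm v \<le> M * norm (z - x)"
    and vd: "v \<bullet> (z - x) \<ge> c * (norm (z - x))^2"
    and gb: "norm (F x - F xs) \<le> L * norm (x - xs)"
  shows "norm (z - x) \<le> max 1 (2 * (4 * L + M + 1) / c) * norm (x - xs)"
proof -
  define w where "w = closest_point C (z - p)"
  have CNE: "C \<noteq> {}" using zC by auto
  have xsC: "xs \<in> C" and vi: "F xs \<bullet> (w - xs) \<ge> 0"
    using sol CNE cl unfolding vip_sol_def w_def by (auto intro: closest_point_in_set)
  have pr: "(z - p - w) \<bullet> (xs - w) \<le> 0"
    unfolding w_def by (rule closest_point_dot[OF cvx cl xsC])
  define u where "u = xs - x"
  define d where "d = z - x"
  define g where "g = F x - F xs"
  define n where "n = norm d"
  define a where "a = norm u"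
  have xw: "xs - w = u - d + e" unfolding u_def d_def edef w_def by simp
  have zpw: "z - p - w = e - p" unfolding edef w_def by simp
  have i1: "(e - p) \<bullet> (u - d + e) \<le> 0" using pr xw zpw by simp
  have i2: "F xs \<bullet> (u - d + e) \<le> 0" using vi xw
    by (metis inner_minus_right minus_diff_eq neg_0_le_iff_le)
  have key: "v \<bullet> d \<le> g \<bullet> (u - d + e) + v \<bullet> (u + e) - e \<bullet> (u - d + e)"
    using i1 i2 unfolding pdef g_def by (simp add: algebra_simps inner_diff_left inner_diff_right inner_add_left inner_add_right)
  have ne: "norm e \<le> \<eta> * n" using eb unfolding n_def d_def .
  have n0: "n \<ge> 0" "a \<ge> 0" unfolding n_def a_def by auto
  have nu: "norm (u - d + e) \<le> a + n + \<eta> * n"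
    using norm_triangle_ineq4[of u d] norm_triangle_ineq[of "u - d" e] ne unfolding a_def n_def by linarith
  have nue: "norm (u + e) \<le> a + \<eta> * n"
    using norm_triangle_ineq[of u e] ne unfolding a_def by linarith
  have gn: "norm g \<le> L * a" using gb unfolding g_def a_def u_def by (simp add: norm_minus_commute)
  have t1: "g \<bullet> (u - d + e) \<le> L * a * (a + n + \<eta> * n)"
    using norm_cauchy_schwarz[of g "u - d + e"] gn nu
    by (smt (verit) mult_mono n0 norm_ge_zero mult_nonneg_nonneg eta0)
  have vn: "norm v \<le> M * n" using vb unfolding n_def d_def .
  have t2: "v \<bullet> (u + e) \<le> M * n * (a + \<eta> * n)"
    using norm_cauchy_schwarz[of v "u + e"] vn nue
    by (smt (verit) mult_mono n0 norm_ge_zero mult_nonneg_nonneg eta0)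
  have t3: "- (e \<bullet> (u - d + e)) \<le> \<eta> * n * (a + n + \<eta> * n)"
    using norm_cauchy_schwarz[of "-e" "u - d + e"] ne nu
    by (smt (verit) inner_minus_left mult_mono n0 norm_ge_zero norm_minus_cancel mult_nonneg_nonneg eta0)
  have vd': "v \<bullet> d \<ge> c * n^2" using vd unfolding n_def d_def .
  have main: "c * n^2 \<le> L * a * (a + n + \<eta> * n) + M * n * (a + \<eta> * n) + \<eta> * n * (a + n + \<eta> * n)"
    using key t1 t2 t3 vd' by linarith
  have e2: "\<eta> * \<eta> \<le> \<eta>" using eta0 eta1 by (simp add: mult_le_one mult_left_le)
  have A: "L * a * (\<eta> * n) \<le> L * a * n" using mult_left_mono[OF mult_left_le_one_le[OF n0(1) eta0 eta1], of "L*a"] L0 n0 by simp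
  have B: "\<eta> * n * (\<eta> * n) \<le> \<eta> * n * n" using e2 n0 by (metis mult.assoc mult.left_commute mult_right_mono zero_le_mult_iff)
  have Cc: "\<eta> * n * a \<le> n * a" using mult_right_mono[OF mult_left_le_one_le[OF n0(1) eta0 eta1] n0(2)] by simp
  have main2: "(c / 2) * n^2 \<le> (3 * L + M + 1) * a * n + L * a * a"
  proof -
    have "c * n^2 \<le> L * a * a + 2 * L * a * n + M * n * a + M * \<eta> * n * n + n * a + 2 * \<eta> * n * n"
      using main A B Cc by (simp add: algebra_simps power2_eq_square)
    moreover have "\<eta> * (M + 2) * (n * n) \<le> c / 2 * (n * n)" using mult_right_mono[OF etac, of "n*n"] n0 by simp
    moreover have "0 \<le> L * a * n" using n0 L0 by simp
    ultimately have "c * (n*n) \<le> L * a * a + (2 * L + M + 1) * (a * n) + c / 2 * (n * n)"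
      by (simp add: algebra_simps power2_eq_square)
    moreover have "(2 * L + M + 1) * (a * n) + L * (a * n) = (3 * L + M + 1) * (a * n)" by (simp add: algebra_simps)
    ultimately show ?thesis using \<open>0 \<le> L * a * n\<close> by (simp add: algebra_simps power2_eq_square)
  qed
  define K where "K = max 1 (2 * (4 * L + M + 1) / c)"
  have "n \<le> K * a"
  proof (cases "n \<le> a")
    case True
    have "a \<le> K * a" using n0 unfolding K_def by (simp add: mult_le_cancel_right1)
    then show ?thesis using True by linarith
  next
    case False
    then have npos: "n > 0" using n0 by linarith
    have "L * a * a \<le> L * a * n" using False L0 n0 by (simp add: mult_left_mono)
    then have "(c / 2) * (n * n) \<le> ((4 * L + M + 1) * a) * n"
      using main2 by (simp add: algebra_simps power2_eq_square)
    then have "(c / 2) * n \<le> (4 * L + M + 1) * a" using npos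
      by (simp add: mult.assoc[symmetric] mult_le_cancel_right)
    then have "n \<le> 2 * (4 * L + M + 1) / c * a" using c0 by (simp add: field_simps)
    moreover have "2 * (4 * L + M + 1) / c * a \<le> K * a" unfolding K_def using n0 mult_right_mono[OF max.cobounded2[of "2 * (4 * L + M + 1) / c" 1], of a] by simp
    ultimately show ?thesis by linarith
  qed
  then show ?thesis unfolding K_def n_def a_def d_def u_def by (simp add: norm_minus_commute)
qed

lemma sq_bound:
  fixes t q \<alpha> :: real assumes "\<alpha> > 0"
  shows "t * q - \<alpha> / 2 * q^2 \<le> t^2 / (2 * \<alpha>)"
proof -
  have "0 \<le> (t - \<alpha> * q)^2" by simp
  then have "2 * \<alpha> * (t * q - \<alpha> / 2 * q^2) \<le> t^2" by (simp add: power2_eq_square algebra_simps)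
  then show ?thesis using assms by (simp add: field_simps)
qed

lemma meritb:
  fixes F :: "'a::euclidean_space \<Rightarrow> 'a"
  assumes cvx: "convex C" and cl: "closed C" and zC: "z \<in> C" and al: "\<alpha> > 0"
    and edef: "e = z - closest_point C (z - p)"
    and ie2: "e \<bullet> (p + z - x) \<le> s * (norm (z - x))^2"
    and ie1: "norm e \<le> s * norm (z - x)"
  shows "merit F C \<alpha> z \<le> 2 * s * (norm (z - x))^2 + (norm e + norm (F z - p))^2 / (2 * \<alpha>)"
  unfolding merit_def
proof (rule cSUP_least)
  show "C \<noteq> {}" using zC by auto
next
  fix y assume yC: "y \<in> C"
  define w where "w = closest_point C (z - p)"
  define q where "q = y - z"
  define E where "E = F z - p"
  define n where "n = norm (z - x)"
  have pr: "(z - p - w) \<bullet> (y - w) \<le> 0"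
    unfolding w_def by (rule closest_point_dot[OF cvx cl yC])
  have eq1: "z - p - w = e - p" unfolding edef w_def by simp
  have eq2: "y - w = q + e" unfolding edef w_def q_def by simp
  have pr2: "(e - p) \<bullet> (q + e) \<le> 0" using pr unfolding eq1 eq2 .
  have "- (p \<bullet> q) \<le> p \<bullet> e - e \<bullet> q - e \<bullet> e"
    using pr2 by (simp add: algebra_simps inner_commute)
  moreover have "0 \<le> e \<bullet> e" by simp
  ultimately have A: "- (p \<bullet> q) \<le> p \<bullet> e - e \<bullet> q" by linarith
  have "e \<bullet> p \<le> s * n^2 - e \<bullet> (z - x)" using ie2 unfolding n_def
    by (simp add: algebra_simps inner_add_right inner_diff_right)
  moreover have "- (e \<bullet> (z - x)) \<le> norm e * n"
    using norm_cauchy_schwarz[of "-e" "z - x"] unfolding n_def by simp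
  moreover have "norm e * n \<le> s * n * n" using ie1 unfolding n_def by (simp add: mult_right_mono)
  ultimately have B: "p \<bullet> e \<le> 2 * s * n^2" by (simp add: inner_commute power2_eq_square)
  have Fz: "F z = p + E" unfolding E_def by simp
  have "- (F z \<bullet> q) \<le> 2 * s * n^2 - (e + E) \<bullet> q"
    using A B unfolding Fz by (simp add: algebra_simps inner_add_left)
  moreover have "- ((e + E) \<bullet> q) \<le> norm (e + E) * norm q"
    using norm_cauchy_schwarz[of "-(e+E)" q] by (simp only: inner_minus_left norm_minus_cancel)
  moreover have "norm (e + E) * norm q - \<alpha> / 2 * (norm q)^2 \<le> (norm (e + E))^2 / (2 * \<alpha>)"
    by (rule sq_bound[OF al])
  moreover have "(norm (e + E))^2 \<le> (norm e + norm E)^2"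
    by (rule power_mono[OF norm_triangle_ineq]) simp
  ultimately have "- (F z \<bullet> q) - \<alpha> / 2 * (norm q)^2 \<le> 2 * s * n^2 + (norm e + norm E)^2 / (2 * \<alpha>)"
    using al by (smt (verit) divide_right_mono zero_le_mult_iff)
  then show "- (F z \<bullet> (y - z)) - \<alpha> / 2 * (norm (y - z))^2 \<le> 2 * s * (norm (z - x))^2 + (norm e + norm (F z - p))^2 / (2 * \<alpha>)"
    unfolding q_def E_def n_def .
qed


lemma taylor_bound:
  fixes F :: "real^'n \<Rightarrow> real^'n" and JF :: "real^'n \<Rightarrow> real^'n^'n"
  assumes F_deriv: "\<And>y. (F has_derivative (\<lambda>h. JF y *v h)) (at y)"
    and JF_lip: "\<And>u v. u \<in> X \<Longrightarrow> v \<in> X \<Longrightarrow> mnorm (JF u - JF v) \<le> L2 * norm (u - v)"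
    and L2: "L2 \<ge> 0"
    and seg: "closed_segment x z \<subseteq> X"
  shows "norm (F z - F x - JF x *v (z - x)) \<le> L2 * (norm (z - x))^2"
proof -
  have "norm (F z - F x - JF x *v (z - x)) \<le> norm (z - x) * (L2 * norm (z - x))"
  proof (rule differentiable_bound_linearization[where S = "closed_segment x z" and f' = "\<lambda>w h. JF w *v h"])
    fix t :: real assume "t \<in> {0..1}"
    then show "x + t *\<^sub>R (z - x) \<in> closed_segment x z"
      unfolding in_segment by (intro exI[of _ t]) (auto simp: algebra_simps)
  next
    fix w assume "w \<in> closed_segment x z"
    show "(F has_derivative (\<lambda>h. JF w *v h)) (at w within closed_segment x z)"
      by (rule has_derivative_at_withinI[OF F_deriv])
  next
    fix w assume w: "w \<in> closed_segment x z"
    have eq: "(\<lambda>h. JF w *v h) - (\<lambda>h. JF x *v h) = (\<lambda>h. (JF w - JF x) *v h)"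
      by (rule ext) (simp add: matrix_vector_mult_diff_rdistrib)
    have xX: "x \<in> X" and wX: "w \<in> X" using seg w by auto
    have "dist w x \<le> dist x z" using dist_in_closed_segment[OF w] by simp
    then have "norm (w - x) \<le> norm (z - x)" by (simp add: dist_norm norm_minus_commute)
    then have "L2 * norm (w - x) \<le> L2 * norm (z - x)" using L2 by (simp add: mult_left_mono)
    then show "onorm ((\<lambda>h. JF w *v h) - (\<lambda>h. JF x *v h)) \<le> L2 * norm (z - x)"
      unfolding eq using JF_lip[OF wX xX] unfolding mnorm_def by linarith
  next
    show "x \<in> closed_segment x z" by simp
  qed
  then show ?thesis by (simp add: power2_eq_square algebra_simps)
qed

theorem mainTheorem5:
  fixes C :: "(real^'n) set" and F :: "real^'n \<Rightarrow> real^'n"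
    and JF :: "real^'n \<Rightarrow> real^'n^'n"
    and xs :: "real^'n" and X :: "(real^'n) set"
    and L1 L2 \<mu> D C1 C2 :: real
    and x z zh :: "nat \<Rightarrow> real^'n" and B :: "nat \<Rightarrow> real^'n^'n"
    and mu \<rho> \<delta> :: "nat \<Rightarrow> real"
  defines "\<phi> \<equiv> (\<lambda>k w. F (x k) + (B k + mat (mu k)) *v (w - x k))"
  assumes C_ne: "C \<noteq> {}" and C_closed: "closed C" and C_convex: "convex C"
    and F_deriv: "\<And>y. (F has_derivative (\<lambda>h. JF y *v h)) (at y)"
    and JF_cont: "continuous_on UNIV JF"
    and xs_sol: "vip_sol F C xs"
    and X_nhd: "xs \<in> interior X"
    and L1_pos: "L1 > 0" and L2_pos: "L2 > 0" and mu_const_pos: "\<mu> > 0"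
    and F_lip: "\<And>u v. u \<in> X \<Longrightarrow> v \<in> X \<Longrightarrow> norm (F u - F v) \<le> L1 * norm (u - v)"
    and JF_lip: "\<And>u v. u \<in> X \<Longrightarrow> v \<in> X \<Longrightarrow> mnorm (JF u - JF v) \<le> L2 * norm (u - v)"
    and JF_strong: "\<And>u d. u \<in> X \<Longrightarrow> (JF u *v d) \<bullet> d \<ge> \<mu> * (norm d)^2"
    and x_in: "\<And>k. x k \<in> C" and x_lim: "x \<longlonglongrightarrow> xs"
    and mu_pos: "\<And>k. mu k > 0" and rho_nonneg: "\<And>k. \<rho> k \<ge> 0"
    and delta_pos: "\<And>k. \<delta> k > 0"
    and z_in: "\<And>k. z k \<in> C"
    and z_inexact1: "eventually (\<lambda>k. norm (z k - closest_point C (z k - \<phi> k (z k)))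
                        \<le> \<rho> k * mu k * norm (z k - x k)) sequentially"
    and z_inexact2: "eventually (\<lambda>k. (z k - closest_point C (z k - \<phi> k (z k))) \<bullet> (\<phi> k (z k) + z k - x k)
                        \<le> \<rho> k * mu k * (norm (z k - x k))^2) sequentially"
    and zh_sol: "eventually (\<lambda>k. vip_sol (\<phi> k) C (zh k)) sequentially"
    and D_pos: "D > 0" and C1_pos: "C1 > 0" and C2_pos: "C2 > 0"
    and H1: "eventually (\<lambda>k. mnorm (B k - JF (x k)) \<le> D) sequentially"
    and H2: "mu \<in> O(\<lambda>k. resid F C (x k))"
    and H3: "eventually (\<lambda>k. mu k \<le> C1 * norm (x k - xs)) sequentially"
    and H4: "\<rho> \<longlonglongrightarrow> 0"
    and H5: "eventually (\<lambda>k. pos_def (B k + mat (mu k))) sequentially"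
    and H6: "eventually (\<lambda>k. (1 + mnorm (B k + mat (mu k))) / min_eig_sym (B k + mat (mu k)) \<le> C2) sequentially"
    and H7: "eventually (\<lambda>k. norm ((B k - JF (x k)) *v (z k - x k)) \<le> \<delta> k * norm (z k - x k)) sequentially"
    and H8: "eventually (\<lambda>k. mu k < \<mu> / 2) sequentially"
    and H9: "eventually (\<lambda>k. \<delta> k \<le> \<mu> / 16) sequentially"
  shows "\<forall>\<alpha>>0. \<exists>L1' L2' L3' L4' L5'. L1' > 0 \<and> L2' > 0 \<and> L3' > 0 \<and> L4' > 0 \<and> L5' > 0 \<and>
           eventually (\<lambda>k. merit F C \<alpha> (z k)
              \<le> L1' * norm (x k - xs)^4 + (L2' * \<delta> k + L3') * norm (x k - xs)^3
                 + (L4' * \<delta> k + L5' * (\<delta> k)^2) * norm (x k - xs)^2) sequentially"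
proof (intro allI impI)
  fix \<alpha> :: real assume al: "\<alpha> > 0"
  obtain r where r: "r > 0" "cball xs r \<subseteq> X" using X_nhd mem_interior_cball by blast
  define M where "M = \<bar>mnorm (JF xs)\<bar> + L2 + \<mu>"
  define c where "c = \<mu> / 2"
  define \<eta> where "\<eta> = min 1 (\<mu> / (4 * (M + 2)))"
  define K where "K = max 1 (2 * (4 * L1 + M + 1) / c)"
  define G where "G = 2 * C1 * K + L2 * K^2"
  have M0: "M \<ge> 0" unfolding M_def using L2_pos mu_const_pos by simp
  have c0: "c > 0" unfolding c_def using mu_const_pos by simp
  have eta0: "\<eta> > 0" unfolding \<eta>_def using mu_const_pos M0 by simp
  have eta1: "\<eta> \<le> 1" unfolding \<eta>_def by simp
  have etac: "\<eta> * (M + 2) \<le> c / 2"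
  proof -
    have "\<eta> \<le> \<mu> / (4 * (M + 2))" unfolding \<eta>_def by simp
    then have "\<eta> * (M + 2) \<le> \<mu> / (4 * (M + 2)) * (M + 2)" using M0 by (intro mult_right_mono) auto
    also have "\<dots> = c / 2" unfolding c_def using M0 by (simp add: field_simps)
    finally show ?thesis .
  qed
  have K1: "K \<ge> 1" unfolding K_def by simp
  have G0: "G \<ge> 0" unfolding G_def using C1_pos L2_pos K1 by simp
  have rK: "min 1 (r / (K + 1)) > 0" using r K1 by simp
  have evx: "eventually (\<lambda>k. norm (x k - xs) < min 1 (r / (K + 1))) sequentially"
    using x_lim[unfolded tendsto_iff, rule_format, OF rK] by (simp add: dist_norm)
  have evr: "eventually (\<lambda>k. \<rho> k < min 1 (2 * \<eta> / \<mu>)) sequentially"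
  proof -
    have "min 1 (2 * \<eta> / \<mu>) > 0" using eta0 mu_const_pos by simp
    from order_tendstoD(2)[OF H4 this] show ?thesis .
  qed
  show "\<exists>L1' L2' L3' L4' L5'. L1' > 0 \<and> L2' > 0 \<and> L3' > 0 \<and> L4' > 0 \<and> L5' > 0 \<and>
           eventually (\<lambda>k. merit F C \<alpha> (z k)
              \<le> L1' * norm (x k - xs)^4 + (L2' * \<delta> k + L3') * norm (x k - xs)^3
                 + (L4' * \<delta> k + L5' * (\<delta> k)^2) * norm (x k - xs)^2) sequentially"
  proof (intro exI conjI)
    show "G^2 / (2 * \<alpha>) + 1 > 0" using al by (intro add_nonneg_pos) simp_all
    show "G * K / \<alpha> + 1 > 0" using al G0 K1 by (intro add_nonneg_pos) simp_all
    show "2 * C1 * K^2 + 1 > 0" using C1_pos by (intro add_nonneg_pos) simp_all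
    show "(1::real) > 0" by simp
    show "K^2 / (2 * \<alpha>) + 1 > 0" using al by (intro add_nonneg_pos) simp_all
    show "eventually (\<lambda>k. merit F C \<alpha> (z k)
              \<le> (G^2 / (2 * \<alpha>) + 1) * norm (x k - xs)^4 + ((G * K / \<alpha> + 1) * \<delta> k + (2 * C1 * K^2 + 1)) * norm (x k - xs)^3
                 + (1 * \<delta> k + (K^2 / (2 * \<alpha>) + 1) * (\<delta> k)^2) * norm (x k - xs)^2) sequentially"
      using evx evr z_inexact1 z_inexact2 H3 H7 H8 H9
    proof eventually_elim
      case (elim k)
      define a where "a = norm (x k - xs)"
      define d where "d = z k - x k"
      define n where "n = norm d"
      define A where "A = B k + mat (mu k)"
      define v where "v = A *v d"
      define p where "p = \<phi> k (z k)"
      define e where "e = z k - closest_point C (z k - p)"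
      define s where "s = \<rho> k * mu k"
      have pdef: "p = F (x k) + v" unfolding p_def v_def A_def d_def \<phi>_def by simp
      have a0: "a \<ge> 0" and n0: "n \<ge> 0" unfolding a_def n_def by simp_all
      have a1: "a \<le> 1" and ar: "a \<le> r / (K + 1)" using elim(1) unfolding a_def by simp_all
      have "r / (K + 1) \<le> r" using r K1 by (simp add: divide_le_eq)
      then have xB: "x k \<in> cball xs r" using ar unfolding a_def by (simp add: dist_norm norm_minus_commute)
      have xX: "x k \<in> X" using xB r by auto
      have xsX: "xs \<in> X" using r by auto
      have rho1: "\<rho> k \<le> 1" using elim(2) by simp
      have s0: "s \<ge> 0" unfolding s_def using rho_nonneg mu_pos by (simp add: less_imp_le)
      have seta: "s \<le> \<eta>"
      proof -
        have "\<rho> k * mu k \<le> \<rho> k * (\<mu> / 2)" using elim(7) rho_nonneg[of k] by (intro mult_left_mono) auto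
        also have "\<dots> \<le> (2 * \<eta> / \<mu>) * (\<mu> / 2)" using elim(2) mu_const_pos by (intro mult_right_mono) auto
        also have "\<dots> = \<eta>" using mu_const_pos by simp
        finally show ?thesis unfolding s_def .
      qed
      have Aeq: "A *v d = JF (x k) *v d + (B k - JF (x k)) *v d + mu k *\<^sub>R d"
        unfolding A_def by (simp add: matrix_vector_mult_add_rdistrib matrix_vector_mult_diff_rdistrib mat_mulv)
      have H7k: "norm ((B k - JF (x k)) *v d) \<le> \<delta> k * n" using elim(6) unfolding d_def n_def .
      have dmu: "\<delta> k \<le> \<mu> / 16" using elim(8) .
      have vd: "v \<bullet> d \<ge> c * n^2"
      proof -
        have s1: "(JF (x k) *v d) \<bullet> d \<ge> \<mu> * n^2" using JF_strong[OF xX] unfolding n_def .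
        have "- (((B k - JF (x k)) *v d) \<bullet> d) \<le> norm ((B k - JF (x k)) *v d) * n"
          using norm_cauchy_schwarz[of "-((B k - JF (x k)) *v d)" d] unfolding n_def
          by (simp only: inner_minus_left norm_minus_cancel)
        also have "\<dots> \<le> \<delta> k * n * n" using mult_right_mono[OF H7k n0] by simp
        also have "\<dots> \<le> \<mu> / 16 * n * n" using mult_right_mono[OF dmu, of "n*n"] n0 by (simp add: mult.assoc)
        finally have s2: "((B k - JF (x k)) *v d) \<bullet> d \<ge> - (\<mu> / 16 * n * n)" by simp
        have s3: "(mu k *\<^sub>R d) \<bullet> d \<ge> 0" using mu_pos[of k] by (simp add: less_imp_le)
        have "v \<bullet> d = (JF (x k) *v d) \<bullet> d + ((B k - JF (x k)) *v d) \<bullet> d + (mu k *\<^sub>R d) \<bullet> d"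
          unfolding v_def Aeq by (simp add: inner_add_left)
        moreover have "\<mu> * n^2 - \<mu> / 16 * n * n \<ge> c * n^2"
          unfolding c_def using mu_const_pos n0 by (simp add: power2_eq_square algebra_simps)
        ultimately show ?thesis using s1 s2 s3 by linarith
      qed
      have vb: "norm v \<le> M * n"
      proof -
        have j1: "norm (JF xs *v d) \<le> \<bar>mnorm (JF xs)\<bar> * n"
          using mnorm_mulv[of "JF xs" d] n0 unfolding n_def
          by (smt (verit) mult_right_mono abs_ge_self)
        have "norm ((JF (x k) - JF xs) *v d) \<le> mnorm (JF (x k) - JF xs) * n"
          using mnorm_mulv unfolding n_def by blast
        also have "\<dots> \<le> L2 * a * n" using mult_right_mono[OF JF_lip[OF xX xsX] n0] unfolding a_def by simp
        also have "\<dots> \<le> L2 * n" using mult_left_mono[OF mult_right_mono[OF a1 n0], of L2] L2_pos by (simp add: mult.assoc)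
        finally have j2: "norm ((JF (x k) - JF xs) *v d) \<le> L2 * n" .
        have "JF (x k) *v d = JF xs *v d + (JF (x k) - JF xs) *v d" by (simp add: matrix_vector_mult_diff_rdistrib)
        then have j3: "norm (JF (x k) *v d) \<le> \<bar>mnorm (JF xs)\<bar> * n + L2 * n"
          using j1 j2 norm_triangle_ineq[of "JF xs *v d" "(JF (x k) - JF xs) *v d"] by simp
        have j4: "norm ((B k - JF (x k)) *v d) \<le> \<mu> / 16 * n" using H7k dmu n0 by (smt (verit) mult_right_mono)
        have j5: "norm (mu k *\<^sub>R d) \<le> \<mu> / 2 * n" using mult_right_mono[OF less_imp_le[OF elim(7)] n0] mu_pos[of k] unfolding n_def by simp
        have "norm v \<le> norm (JF (x k) *v d) + norm ((B k - JF (x k)) *v d) + norm (mu k *\<^sub>R d)"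
          unfolding v_def Aeq by (meson norm_triangle_le norm_triangle_ineq add_mono order_refl)
        also have "\<dots> \<le> \<bar>mnorm (JF xs)\<bar> * n + L2 * n + \<mu> / 16 * n + \<mu> / 2 * n" using j3 j4 j5 by linarith
        also have "\<dots> \<le> M * n" unfolding M_def using n0 mu_const_pos by (simp add: algebra_simps)
        finally show ?thesis .
      qed
      have gb: "norm (F (x k) - F xs) \<le> L1 * norm (x k - xs)" using F_lip[OF xX xsX] .
      have eb1: "norm e \<le> s * n" using elim(3) unfolding e_def p_def s_def n_def d_def .
      have eb: "norm e \<le> \<eta> * norm (z k - x k)"
        using eb1 seta n0 unfolding n_def d_def by (smt (verit) mult_right_mono)
      have nK: "norm (z k - x k) \<le> K * norm (x k - xs)"
        unfolding K_def
        by (rule dbound[OF C_convex C_closed xs_sol z_in pdef e_def eb less_imp_le[OF eta0] eta1 etac c0 M0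
              less_imp_le[OF L1_pos] vb[unfolded n_def d_def] vd[unfolded n_def d_def] gb])
      have nKa: "n \<le> K * a" using nK unfolding n_def d_def a_def .
      have "dist xs (z k) \<le> a + n" unfolding a_def n_def d_def dist_norm
        using norm_triangle_ineq[of "xs - x k" "x k - z k"] by (simp add: norm_minus_commute)
      also have "\<dots> \<le> (K + 1) * a" using nKa by (simp add: algebra_simps)
      also have "\<dots> \<le> r" using ar K1 by (simp add: field_simps)
      finally have zB: "z k \<in> cball xs r" by simp
      have seg: "closed_segment (x k) (z k) \<subseteq> X"
        using closed_segment_subset[OF xB zB convex_cball] r by auto
      have tay: "norm (F (z k) - F (x k) - JF (x k) *v d) \<le> L2 * n^2"
        using taylor_bound[OF F_deriv JF_lip less_imp_le[OF L2_pos] seg] unfolding n_def d_def .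
      have "F (z k) - p = (F (z k) - F (x k) - JF (x k) *v d) - (B k - JF (x k)) *v d - mu k *\<^sub>R d"
        unfolding pdef v_def Aeq by (simp add: algebra_simps)
      then have Eb: "norm (F (z k) - p) \<le> L2 * n^2 + \<delta> k * n + mu k * n"
        using tay H7k mu_pos[of k] unfolding n_def
        by (smt (verit) norm_triangle_ineq4 norm_scaleR)
      have mb: "merit F C \<alpha> (z k) \<le> 2 * s * n^2 + (norm e + norm (F (z k) - p))^2 / (2 * \<alpha>)"
        using meritb[OF C_convex C_closed z_in al e_def, of "x k" s F] elim(4) elim(3)
        unfolding s_def e_def p_def n_def d_def by simp
      have dl0: "\<delta> k \<ge> 0" using delta_pos[of k] by simp
      have C1a: "C1 * a \<ge> 0" using C1_pos a0 by simp
      have mC: "mu k \<le> C1 * a" using elim(5) unfolding a_def .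
      have sC: "s \<le> C1 * a" unfolding s_def
        using mult_mono[OF rho1 mC] mu_pos[of k] C1a by simp
      have n2: "n^2 \<le> K^2 * a^2" using power_mono[OF nKa n0, of 2] by (simp add: power_mult_distrib)
      have T1: "2 * s * n^2 \<le> 2 * C1 * K^2 * a^3"
      proof -
        have "s * n^2 \<le> (C1 * a) * (K^2 * a^2)" by (rule mult_mono[OF sC n2 C1a]) simp
        then show ?thesis by (simp add: power2_eq_square power3_eq_cube algebra_simps)
      qed
      have Ka0: "K * a \<ge> 0" using K1 a0 by simp
      have q1: "norm e \<le> C1 * a * (K * a)" using eb1 mult_mono[OF sC nKa C1a n0] by linarith
      have q2: "L2 * n^2 \<le> L2 * (K^2 * a^2)" using mult_left_mono[OF n2, of L2] L2_pos by simp
      have q3: "\<delta> k * n \<le> \<delta> k * (K * a)" using mult_left_mono[OF nKa dl0] .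
      have q4: "mu k * n \<le> C1 * a * (K * a)" using mult_mono[OF mC nKa C1a n0] .
      have T2: "norm e + norm (F (z k) - p) \<le> G * a^2 + \<delta> k * K * a"
      proof -
        have "norm e + norm (F (z k) - p) \<le> C1 * a * (K * a) + L2 * (K^2 * a^2) + \<delta> k * (K * a) + C1 * a * (K * a)"
          using q1 q2 q3 q4 Eb by linarith
        also have "\<dots> = G * a^2 + \<delta> k * K * a" unfolding G_def by (simp add: power2_eq_square algebra_simps)
        finally show ?thesis .
      qed
      have T3: "(norm e + norm (F (z k) - p))^2 \<le> (G * a^2 + \<delta> k * K * a)^2"
        by (rule power_mono[OF T2]) simp
      have T4: "(norm e + norm (F (z k) - p))^2 / (2 * \<alpha>) \<le> (G * a^2 + \<delta> k * K * a)^2 / (2 * \<alpha>)"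
        using T3 al by (simp add: divide_right_mono)
      have T5: "(G * a^2 + \<delta> k * K * a)^2 / (2 * \<alpha>) = G^2 / (2 * \<alpha>) * a^4 + (G * K / \<alpha>) * \<delta> k * a^3 + K^2 / (2 * \<alpha>) * (\<delta> k)^2 * a^2"
        using al by (simp add: field_simps power2_eq_square power3_eq_cube power4_eq_xxxx)
      have R: "(G^2 / (2 * \<alpha>) + 1) * a^4 + ((G * K / \<alpha> + 1) * \<delta> k + (2 * C1 * K^2 + 1)) * a^3
                 + (1 * \<delta> k + (K^2 / (2 * \<alpha>) + 1) * (\<delta> k)^2) * a^2
             = (G^2 / (2 * \<alpha>) * a^4 + (G * K / \<alpha>) * \<delta> k * a^3 + K^2 / (2 * \<alpha>) * (\<delta> k)^2 * a^2 + 2 * C1 * K^2 * a^3)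
               + (a^4 + \<delta> k * a^3 + a^3 + \<delta> k * a^2 + (\<delta> k)^2 * a^2)"
        by (simp add: algebra_simps)
      have nn: "a^4 + \<delta> k * a^3 + a^3 + \<delta> k * a^2 + (\<delta> k)^2 * a^2 \<ge> 0" using a0 dl0 by simp
      have "merit F C \<alpha> (z k) \<le> (G^2 / (2 * \<alpha>) + 1) * a^4 + ((G * K / \<alpha> + 1) * \<delta> k + (2 * C1 * K^2 + 1)) * a^3
                 + (1 * \<delta> k + (K^2 / (2 * \<alpha>) + 1) * (\<delta> k)^2) * a^2"
        unfolding R using mb T1 T4 T5 nn by linarith
      then show ?case unfolding a_def .
    qed
  qed
qed

end
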